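(* Let $\mathcal R$ be an energy relation under energy constraint $E$ (of an ETP or a finite composition of such). Then the greatest fixpoint $\nu\mathcal R^{-1}$ of the map $I\mapsto\mathcal R^{-1}(I)$ on the complete lattice $(\mathcal I(E),\supseteq)$ exists, is a closed (possibly empty) interval, and $$\nu\mathcal R^{-1}=\bigcap_{i\in\mathbb N}(\mathcal R^{-1})^i(E).$$ Moreover, $\nu\mathcal R^{-1}$ is the largest subset $S\subseteq E$ such that for every $w_0\in S$ there is $w_1\in S$ with $\mathcal R(w_0,w_1)$. In particular, if $\mathcal R$ is the energy relation of a cycle $\mathcal C$ (an ETP, or concatenation of ETPs, starting and ending at the same macro-state), then $\nu\mathcal R^{-1}$ is exactly the set of initial energy levels $w_0\in E$ from which there is an infinite run iterating $\mathcal C$ forever that satisfies $E$.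
   Context: An energy timed automaton (ETA) is a tuple $\langle S,S_0,X,\mathrm{Inv},r,T\rangle$ with finite states $S$, initial states $S_0$, clocks $X$, invariants $\mathrm{Inv}(s)$ that are conjunctions of closed clock constraints $x\bowtie c$ ($\bowtie\in\{\le,\ge,=\}$, $c$ rational), rates $r\colon S\to\mathbb Q$, and transitions $(s,g,u,z,s')$ with closed guard $g$, update $u\in\mathbb Q$, reset set $z\subseteq X$. A run alternates delays $d\ge0$ in a state $s$ (clocks increase by $d$, invariant must hold, energy increases by $d\cdot r(s)$) and transitions (guard must hold, clocks in $z$ reset to $0$, energy increases by $u$). An energy constraint is a closed interval $E$ with rational bounds; a run satisfies $E$ if all its energy levels lie in $E$. $\mathcal I(E)$ is the set of closed subintervals of $E$ (including $\emptyset$). An energy timed path (ETP) from $s_0$ to $s_n$ is an ETA whose states $s_0,\dots,s_n$ are linked by exactly one transition from $s_i$ to $s_{i+1}$ each. Its energy relation $\mathcal R^E_{\mathcal P}(w_0,w_1)$ holds iff there is a finite run from $(s_0,\mathbf 0,w_0)$ to $(s_n,\mathbf 0,w_1)$ satisfying $E$; compositions of energy relations correspond to concatenating paths, and $\mathcal R^k$ is the $k$-fold composition. For $I\in\mathcal I(E)$, $\mathcal R^{-1}(I)=\{w_0\in E\mid \exists w_1\in I.\ \mathcal R(w_0,w_1)\}$. Iterating a cycle means concatenating runs of it, each starting and ending with all clocks equal to $0$, the final energy of one being the initial energy of the next. *)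

theory Defs
  imports Complex_Main
begin

datatype 'c constr = CLe 'c real | CGe 'c real | CEq 'c real

fun sat_atom :: "('c \<Rightarrow> real) \<Rightarrow> 'c constr \<Rightarrow> bool" where
  "sat_atom v (CLe x c) = (v x \<le> c)"
| "sat_atom v (CGe x c) = (v x \<ge> c)"
| "sat_atom v (CEq x c) = (v x = c)"

fun constr_const :: "'c constr \<Rightarrow> real" where
  "constr_const (CLe x c) = c"
| "constr_const (CGe x c) = c"
| "constr_const (CEq x c) = c"

definition sat :: "('c \<Rightarrow> real) \<Rightarrow> 'c constr list \<Rightarrow> bool" where
  "sat v g \<longleftrightarrow> (\<forall>a\<in>set g. sat_atom v a)"

definition rat_guard :: "'c constr list \<Rightarrow> bool" where
  "rat_guard g \<longleftrightarrow> (\<forall>a\<in>set g. constr_const a \<in> \<rat>)"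

text \<open>An energy timed path: states s_0,...,s_n (a list), invariants and rates of states,
  and exactly one transition (s_i, g, u, z, s_(i+1)) per i < n.  The clocks are the
  (finite) type 'c.\<close>
record ('s, 'c) etp =
  P_states :: "'s list"
  P_inv :: "'s \<Rightarrow> 'c constr list"
  P_rate :: "'s \<Rightarrow> real"
  P_trans :: "('s \<times> 'c constr list \<times> real \<times> 'c set \<times> 's) list"

definition wf_etp :: "('s, 'c) etp \<Rightarrow> bool" where
  "wf_etp p \<longleftrightarrow>
     length (P_states p) = Suc (length (P_trans p)) \<and>
     (\<forall>s\<in>set (P_states p). rat_guard (P_inv p s) \<and> P_rate p s \<in> \<rat>) \<and>
     (\<forall>i < length (P_trans p).
        (case P_trans p ! i of (s, g, u, z, s') \<Rightarrow>
           s = P_states p ! i \<and> s' = P_states p ! Suc i \<and> rat_guard g \<and> u \<in> \<rat>))"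

definition tr_guard :: "('s, 'c) etp \<Rightarrow> nat \<Rightarrow> 'c constr list" where
  "tr_guard p i = fst (snd (P_trans p ! i))"
definition tr_upd :: "('s, 'c) etp \<Rightarrow> nat \<Rightarrow> real" where
  "tr_upd p i = fst (snd (snd (P_trans p ! i)))"
definition tr_reset :: "('s, 'c) etp \<Rightarrow> nat \<Rightarrow> 'c set" where
  "tr_reset p i = fst (snd (snd (snd (P_trans p ! i))))"

text \<open>Energy relation R^E_P (w0, w1): there is a finite run from (s_0, 0, w0) to (s_n, 0, w1)
  all of whose energy levels lie in E.  In state s_i the run delays d_i \<ge> 0 (invariant
  holds and energy stays in E throughout the delay), then takes the i-th transition
  (guard holds, energy updated by u, clocks in z reset).  v i / e i are the clock
  valuation and energy on entering s_i.\<close>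
definition etp_rel :: "real set \<Rightarrow> ('s, 'c) etp \<Rightarrow> real \<Rightarrow> real \<Rightarrow> bool" where
  "etp_rel E p w0 w1 \<longleftrightarrow>
    (let n = length (P_trans p); st = P_states p in
     \<exists>(v :: nat \<Rightarrow> 'c \<Rightarrow> real) (e :: nat \<Rightarrow> real) (d :: nat \<Rightarrow> real).
       v 0 = (\<lambda>_. 0) \<and> e 0 = w0 \<and>
       (\<forall>i\<le>n. d i \<ge> 0 \<and>
          (\<forall>t\<in>{0..d i}. sat (\<lambda>x. v i x + t) (P_inv p (st ! i)) \<and>
                          e i + t * P_rate p (st ! i) \<in> E)) \<and>
       (\<forall>i<n. sat (\<lambda>x. v i x + d i) (tr_guard p i) \<and>
              e (Suc i) = e i + d i * P_rate p (st ! i) + tr_upd p i \<and>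
              e (Suc i) \<in> E \<and>
              v (Suc i) = (\<lambda>x. if x \<in> tr_reset p i then 0 else v i x + d i)) \<and>
       (\<lambda>x. v n x + d n) = (\<lambda>_. 0) \<and>
       w1 = e n + d n * P_rate p (st ! n))"

text \<open>Energy relation of the concatenation of a nonempty list of ETPs
  = composition of their energy relations.\<close>
fun erel_seq :: "real set \<Rightarrow> ('s, 'c) etp list \<Rightarrow> real \<Rightarrow> real \<Rightarrow> bool" where
  "erel_seq E [] = (\<lambda>_ _. False)"
| "erel_seq E [p] = etp_rel E p"
| "erel_seq E (p # q # ps) = (etp_rel E p OO erel_seq E (q # ps))"

definition is_cycle :: "('s, 'c) etp list \<Rightarrow> bool" where
  "is_cycle ps \<longleftrightarrow> ps \<noteq> [] \<and>
     (\<forall>j. Suc j < length ps \<longrightarrow> last (P_states (ps ! j)) = hd (P_states (ps ! Suc j))) \<and>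
     hd (P_states (hd ps)) = last (P_states (last ps))"

text \<open>I(E): closed subintervals of E (including the empty set).\<close>
definition closed_subints :: "real set \<Rightarrow> real set set" where
  "closed_subints E = {I. I \<subseteq> E \<and> (\<exists>c d. I = {c..d})}"

definition pre_rel :: "real set \<Rightarrow> (real \<Rightarrow> real \<Rightarrow> bool) \<Rightarrow> real set \<Rightarrow> real set" where
  "pre_rel E R I = {w0 \<in> E. \<exists>w1\<in>I. R w0 w1}"

end

theory Submission
  imports Defs "HOL-Analysis.Analysis"
begin


abbreviation rt :: "('s,'c) etp \<Rightarrow> nat \<Rightarrow> real" where "rt p i \<equiv> P_rate p (P_states p ! i)"
abbreviation iv :: "('s,'c) etp \<Rightarrow> nat \<Rightarrow> 'c constr list" where "iv p i \<equiv> P_inv p (P_states p ! i)"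

fun clk :: "('s,'c) etp \<Rightarrow> (nat \<Rightarrow> real) \<Rightarrow> nat \<Rightarrow> 'c \<Rightarrow> real" where
  "clk p d 0 = (\<lambda>_. 0)"
| "clk p d (Suc i) = (\<lambda>x. if x \<in> tr_reset p i then 0 else clk p d i x + d i)"

fun en :: "('s,'c) etp \<Rightarrow> real \<Rightarrow> (nat \<Rightarrow> real) \<Rightarrow> nat \<Rightarrow> real" where
  "en p w0 d 0 = w0"
| "en p w0 d (Suc i) = en p w0 d i + d i * rt p i + tr_upd p i"

definition good :: "real \<Rightarrow> real \<Rightarrow> ('s,'c) etp \<Rightarrow> real \<Rightarrow> (nat \<Rightarrow> real) \<Rightarrow> bool" where
 "good a b p w0 d \<longleftrightarrow>
   (\<forall>i\<le>length (P_trans p). 0 \<le> d i \<and> sat (clk p d i) (iv p i) \<and>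
       sat (\<lambda>x. clk p d i x + d i) (iv p i) \<and> en p w0 d i \<in> {a..b} \<and>
       en p w0 d i + d i * rt p i \<in> {a..b}) \<and>
   (\<forall>i<length (P_trans p). sat (\<lambda>x. clk p d i x + d i) (tr_guard p i)) \<and>
   (\<forall>x. clk p d (length (P_trans p)) x + d (length (P_trans p)) = 0)"

definition w1of :: "('s,'c) etp \<Rightarrow> real \<Rightarrow> (nat \<Rightarrow> real) \<Rightarrow> real" where
  "w1of p w0 d = en p w0 d (length (P_trans p)) + d (length (P_trans p)) * rt p (length (P_trans p))"

lemma sat_between:
  assumes "sat v g" "sat (\<lambda>x. v x + d) g" "0 \<le> t" "t \<le> d"
  shows "sat (\<lambda>x. v x + t) g"
  unfolding sat_def
proof
  fix a assume a: "a \<in> set g"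
  have 1: "sat_atom v a" "sat_atom (\<lambda>x. v x + d) a" using assms a unfolding sat_def by auto
  show "sat_atom (\<lambda>x. v x + t) a" using 1 assms(3,4) by (cases a) auto
qed

lemma energy_between:
  fixes e d r t :: real
  assumes "e \<in> {a..b}" "e + d * r \<in> {a..b}" "0 \<le> t" "t \<le> d"
  shows "e + t * r \<in> {a..b}"
proof (cases "r \<ge> 0")
  case True
  have "0 \<le> t * r" "t * r \<le> d * r" using True assms by (auto intro: mult_right_mono)
  then show ?thesis using assms by auto
next
  case False
  have "t * r \<le> 0" "d * r \<le> t * r" using False assms by (auto intro: mult_right_mono_neg mult_nonneg_nonpos)
  then show ?thesis using assms by auto
qed

lemma etp_rel_good:
  "etp_rel {a..b} p w0 w1 \<longleftrightarrow> (\<exists>d. good a b p w0 d \<and> w1 = w1of p w0 d)"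
proof
  assume "etp_rel {a..b} p w0 w1"
  then obtain v e d where
    v0: "v 0 = (\<lambda>_. 0)" and e0: "e 0 = w0" and
    H1: "\<forall>i\<le>length (P_trans p). d i \<ge> 0 \<and>
          (\<forall>t\<in>{0..d i}. sat (\<lambda>x. v i x + t) (iv p i) \<and> e i + t * rt p i \<in> {a..b})" and
    H2: "\<forall>i<length (P_trans p). sat (\<lambda>x. v i x + d i) (tr_guard p i) \<and>
              e (Suc i) = e i + d i * rt p i + tr_upd p i \<and> e (Suc i) \<in> {a..b} \<and>
              v (Suc i) = (\<lambda>x. if x \<in> tr_reset p i then 0 else v i x + d i)" and
    H3: "(\<lambda>x. v (length (P_trans p)) x + d (length (P_trans p))) = (\<lambda>_. 0)" and
    H4: "w1 = e (length (P_trans p)) + d (length (P_trans p)) * rt p (length (P_trans p))"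
    unfolding etp_rel_def Let_def by blast
  have eq: "v i = clk p d i \<and> e i = en p w0 d i" if "i \<le> length (P_trans p)" for i
    using that
  proof (induction i)
    case 0 then show ?case using v0 e0 by simp
  next
    case (Suc i) then show ?case using H2[rule_format, of i] by auto
  qed
  have "good a b p w0 d"
    unfolding good_def
  proof (intro conjI allI impI)
    fix i assume i: "i \<le> length (P_trans p)"
    have dz: "d i \<ge> 0" using H1 i by auto
    have A: "sat (\<lambda>x. v i x + t) (iv p i) \<and> e i + t * rt p i \<in> {a..b}" if "t \<in> {0..d i}" for t
      using H1 i that by auto
    note B = A[of 0] A[of "d i"]
    show "0 \<le> d i" by fact
    show "sat (clk p d i) (iv p i)" using B(1) dz eq[OF i] by simp
    show "sat (\<lambda>x. clk p d i x + d i) (iv p i)" using B(2) dz eq[OF i] by simp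
    show "en p w0 d i \<in> {a..b}" using B(1) dz eq[OF i] by simp
    show "en p w0 d i + d i * rt p i \<in> {a..b}" using B(2) dz eq[OF i] by simp
  next
    fix i assume i: "i < length (P_trans p)"
    then show "sat (\<lambda>x. clk p d i x + d i) (tr_guard p i)" using H2 eq[of i] by auto
  next
    fix x show "clk p d (length (P_trans p)) x + d (length (P_trans p)) = 0"
      using H3 eq[of "length (P_trans p)"] by (metis order_refl)
  qed
  moreover have "w1 = w1of p w0 d" using H4 eq[of "length (P_trans p)"] unfolding w1of_def by simp
  ultimately show "\<exists>d. good a b p w0 d \<and> w1 = w1of p w0 d" by blast
next
  assume "\<exists>d. good a b p w0 d \<and> w1 = w1of p w0 d"
  then obtain d where g: "good a b p w0 d" and w: "w1 = w1of p w0 d" by blast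
  show "etp_rel {a..b} p w0 w1"
    unfolding etp_rel_def Let_def
  proof (intro exI conjI allI impI ballI)
    show "clk p d 0 = (\<lambda>_. 0)" by simp
    show "en p w0 d 0 = w0" by simp
  next
    fix i assume i: "i \<le> length (P_trans p)"
    then show "0 \<le> d i" using g unfolding good_def by auto
  next
    fix i t assume i: "i \<le> length (P_trans p)" and t: "t \<in> {0..d i}"
    show "sat (\<lambda>x. clk p d i x + t) (iv p i)"
      using g i t unfolding good_def by (auto intro: sat_between)
    show "en p w0 d i + t * rt p i \<in> {a..b}"
      using g i t energy_between[of "en p w0 d i" a b "d i" "rt p i" t] unfolding good_def by auto
  next
    fix i assume i: "i < length (P_trans p)"
    show "sat (\<lambda>x. clk p d i x + d i) (tr_guard p i)" using g i unfolding good_def by auto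
    show "en p w0 d (Suc i) = en p w0 d i + d i * rt p i + tr_upd p i" by simp
    show "en p w0 d (Suc i) \<in> {a..b}" using g i unfolding good_def
      by (metis Suc_leI en.simps(2))
    show "clk p d (Suc i) = (\<lambda>x. if x \<in> tr_reset p i then 0 else clk p d i x + d i)" by simp
  next
    show "(\<lambda>x. clk p d (length (P_trans p)) x + d (length (P_trans p))) = (\<lambda>_. 0)"
      using g unfolding good_def by auto
    show "w1 = en p w0 d (length (P_trans p)) + d (length (P_trans p)) * rt p (length (P_trans p))"
      using w unfolding w1of_def by simp
  qed
qed


lemma clk_comb: "clk p (\<lambda>j. u * d j + v * d' j) i x = u * clk p d i x + v * clk p d' i x"
  by (induction i) (auto simp: algebra_simps)

lemma en_comb: "u + v = 1 \<Longrightarrow> en p (u * w + v * w') (\<lambda>j. u * d j + v * d' j) i = u * en p w d i + v * en p w' d' i"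
proof (induction i)
  case 0 then show ?case by simp
next
  case (Suc i)
  have "tr_upd p i = u * tr_upd p i + v * tr_upd p i" using Suc.prems by (metis distrib_right mult_1)
  then show ?case using Suc by (simp add: algebra_simps)
qed

lemma comb_le: fixes x y c u v :: real
  shows "x \<le> c \<Longrightarrow> y \<le> c \<Longrightarrow> 0 \<le> u \<Longrightarrow> 0 \<le> v \<Longrightarrow> u + v = 1 \<Longrightarrow> u * x + v * y \<le> c"
  by (rule convex_bound_le)

lemma comb_ge: fixes x y c u v :: real
  shows "c \<le> x \<Longrightarrow> c \<le> y \<Longrightarrow> 0 \<le> u \<Longrightarrow> 0 \<le> v \<Longrightarrow> u + v = 1 \<Longrightarrow> c \<le> u * x + v * y"
proof -
  assume "c \<le> x" "c \<le> y" "0 \<le> u" "0 \<le> v" "u + v = 1"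
  then have "u * c \<le> u * x" "v * c \<le> v * y" by (auto intro: mult_left_mono)
  moreover have "u * c + v * c = c" using \<open>u+v=1\<close> by (metis distrib_right mult_1)
  ultimately show ?thesis by linarith
qed

lemma comb_in: fixes x y u v :: real
  shows "x \<in> {a..b} \<Longrightarrow> y \<in> {a..b} \<Longrightarrow> 0 \<le> u \<Longrightarrow> 0 \<le> v \<Longrightarrow> u + v = 1 \<Longrightarrow> u * x + v * y \<in> {a..b}"
  using comb_le[of x b y u v] comb_ge[of a x y u v] by auto

lemma sat_comb:
  assumes "sat f g" "sat f' g" "0 \<le> u" "0 \<le> v" "u + v = 1"
  shows "sat (\<lambda>x. u * f x + v * f' x) g"
  unfolding sat_def
proof
  fix a assume a: "a \<in> set g"
  have 1: "sat_atom f a" "sat_atom f' a" using assms a unfolding sat_def by auto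
  show "sat_atom (\<lambda>x. u * f x + v * f' x) a"
  proof (cases a)
    case (CLe x c) then show ?thesis using 1 assms comb_le by auto
  next
    case (CGe x c) then show ?thesis using 1 assms comb_ge by auto
  next
    case (CEq x c) then show ?thesis using 1 assms by (auto simp: distrib_right[symmetric])
  qed
qed

lemma good_comb:
  assumes g1: "good a b p w d" and g2: "good a b p w' d'" and uv: "0 \<le> u" "0 \<le> v" "u + v = 1"
  shows "good a b p (u * w + v * w') (\<lambda>j. u * d j + v * d' j)
       \<and> w1of p (u * w + v * w') (\<lambda>j. u * d j + v * d' j) = u * w1of p w d + v * w1of p w' d'"
proof -
  define dd where "dd = (\<lambda>j. u * d j + v * d' j)"
  have ck: "clk p dd i = (\<lambda>x. u * clk p d i x + v * clk p d' i x)" for i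
    unfolding dd_def by (rule ext, rule clk_comb)
  have ck2: "(\<lambda>x. clk p dd i x + dd i) = (\<lambda>x. u * (clk p d i x + d i) + v * (clk p d' i x + d' i))" for i
    unfolding dd_def by (rule ext, simp add: clk_comb algebra_simps)
  have ee: "en p (u * w + v * w') dd i = u * en p w d i + v * en p w' d' i" for i
    unfolding dd_def using en_comb[OF uv(3)] by blast
  have ee2: "en p (u * w + v * w') dd i + dd i * rt p i = u * (en p w d i + d i * rt p i) + v * (en p w' d' i + d' i * rt p i)" for i
    unfolding ee by (simp add: dd_def algebra_simps)
  have "good a b p (u * w + v * w') dd"
    unfolding good_def
  proof (intro conjI allI impI)
    fix i assume i: "i \<le> length (P_trans p)"
    have G1: "0 \<le> d i \<and> sat (clk p d i) (iv p i) \<and> sat (\<lambda>x. clk p d i x + d i) (iv p i) \<and> en p w d i \<in> {a..b} \<and>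
       en p w d i + d i * rt p i \<in> {a..b}" using g1 i unfolding good_def by blast
    have G2: "0 \<le> d' i \<and> sat (clk p d' i) (iv p i) \<and> sat (\<lambda>x. clk p d' i x + d' i) (iv p i) \<and> en p w' d' i \<in> {a..b} \<and>
       en p w' d' i + d' i * rt p i \<in> {a..b}" using g2 i unfolding good_def by blast
    show "0 \<le> dd i" using G1 G2 uv unfolding dd_def by simp
    show "sat (clk p dd i) (iv p i)" unfolding ck using G1 G2 uv by (intro sat_comb) auto
    show "sat (\<lambda>x. clk p dd i x + dd i) (iv p i)" unfolding ck2 using G1 G2 uv by (intro sat_comb) auto
    show "en p (u * w + v * w') dd i \<in> {a..b}" unfolding ee using G1 G2 uv by (intro comb_in) auto
    show "en p (u * w + v * w') dd i + dd i * rt p i \<in> {a..b}" unfolding ee2 using G1 G2 uv by (intro comb_in) auto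
  next
    fix i assume i: "i < length (P_trans p)"
    show "sat (\<lambda>x. clk p dd i x + dd i) (tr_guard p i)" unfolding ck2 using g1 g2 i uv unfolding good_def
      by (intro sat_comb) auto
  next
    fix x
    show "clk p dd (length (P_trans p)) x + dd (length (P_trans p)) = 0"
      using fun_cong[OF ck2, of "length (P_trans p)" x] g1 g2 unfolding good_def by simp
  qed
  moreover have "w1of p (u * w + v * w') dd = u * w1of p w d + v * w1of p w' d'"
    unfolding w1of_def using ee2 by simp
  ultimately show ?thesis unfolding dd_def by blast
qed

definition rset :: "(real \<Rightarrow> real \<Rightarrow> bool) \<Rightarrow> (real \<times> real) set" where
  "rset R = {(x, y). R x y}"

lemma convex_etp: "convex (rset (etp_rel {a..b} p))"
  unfolding convex_def rset_def
proof (clarsimp)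
  fix x1 y1 x2 y2 u v :: real
  show "etp_rel {a..b} p x1 y1 \<Longrightarrow> etp_rel {a..b} p x2 y2 \<Longrightarrow> 0 \<le> u \<Longrightarrow> 0 \<le> v \<Longrightarrow> u + v = 1 \<Longrightarrow> etp_rel {a..b} p (u * x1 + v * x2) (u * y1 + v * y2)"
  proof -
    assume a1: "etp_rel {a..b} p x1 y1" and a2: "etp_rel {a..b} p x2 y2" and uv: "0 \<le> u" "0 \<le> v" "u + v = 1"
    obtain d1 where d1: "good a b p x1 d1" "y1 = w1of p x1 d1" using a1 unfolding etp_rel_good by blast
    obtain d2 where d2: "good a b p x2 d2" "y2 = w1of p x2 d2" using a2 unfolding etp_rel_good by blast
    show ?thesis unfolding etp_rel_good using good_comb[OF d1(1) d2(1) uv] d1(2) d2(2) by auto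
  qed
qed



section \<open>Truncation\<close>

definition Kc :: "('s,'c) etp \<Rightarrow> real" where
  "Kc p = Max (insert 0 (abs ` constr_const ` (\<Union>i\<le>length (P_trans p). set (iv p i) \<union> set (tr_guard p i))))"

definition Mc :: "('s,'c) etp \<Rightarrow> real" where "Mc p = Kc p + 1"

lemma Kc_ge: assumes "i \<le> length (P_trans p)" "a \<in> set (iv p i) \<union> set (tr_guard p i)"
  shows "\<bar>constr_const a\<bar> \<le> Kc p"
  unfolding Kc_def using assms by (intro Max_ge) auto

lemma Kc_nonneg: "0 \<le> Kc p"
  unfolding Kc_def by (intro Max_ge) auto

lemma Mc_pos: "0 < Mc p" using Kc_nonneg[of p] unfolding Mc_def by simp

definition trunc :: "('s,'c) etp \<Rightarrow> (nat \<Rightarrow> real) \<Rightarrow> nat \<Rightarrow> real" where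
  "trunc p d = (\<lambda>i. if rt p i = 0 then min (d i) (Mc p) else d i)"

definition close :: "real \<Rightarrow> real \<Rightarrow> real \<Rightarrow> bool" where
  "close M a' a \<longleftrightarrow> a' \<le> a \<and> (a' = a \<or> M \<le> a')"

lemma close_step:
  assumes "close M a' a" "0 \<le> a'" "0 \<le> d" "d' = d \<or> (d' = M \<and> M \<le> d)"
  shows "close M (a' + d') (a + d)"
  using assms unfolding close_def by auto

lemma trunc_cases: "trunc p d i = d i \<or> (trunc p d i = Mc p \<and> Mc p \<le> d i)"
  unfolding trunc_def by auto

lemma trunc_nonneg: "0 \<le> d i \<Longrightarrow> 0 \<le> trunc p d i"
  unfolding trunc_def using Mc_pos[of p] by auto

lemma clk_nonneg: "(\<forall>j<i. 0 \<le> d j) \<Longrightarrow> 0 \<le> clk p d i x"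
  by (induction i) auto

lemma clk_trunc: "(\<forall>j<i. 0 \<le> d j) \<Longrightarrow> close (Mc p) (clk p (trunc p d) i x) (clk p d i x)"
proof (induction i)
  case 0 then show ?case by (simp add: close_def)
next
  case (Suc i)
  have "0 \<le> clk p (trunc p d) i x" using Suc.prems by (intro clk_nonneg) (auto intro: trunc_nonneg)
  then have "close (Mc p) (clk p (trunc p d) i x + trunc p d i) (clk p d i x + d i)"
    using Suc by (intro close_step trunc_cases) auto
  then show ?case by (simp add: close_def)
qed

lemma clk_trunc2: "(\<forall>j\<le>i. 0 \<le> d j) \<Longrightarrow> close (Mc p) (clk p (trunc p d) i x + trunc p d i) (clk p d i x + d i)"
proof -
  assume a: "\<forall>j\<le>i. 0 \<le> d j"
  have "0 \<le> clk p (trunc p d) i x" using a by (intro clk_nonneg) (auto intro: trunc_nonneg)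
  then show ?thesis using a clk_trunc[of i d p x] by (intro close_step trunc_cases) auto
qed

lemma sat_close:
  assumes "\<forall>x. close M (f' x) (f x)" "sat f g" "\<forall>a\<in>set g. \<bar>constr_const a\<bar> < M"
  shows "sat f' g"
  unfolding sat_def
proof
  fix a assume a: "a \<in> set g"
  have 1: "sat_atom f a" "\<bar>constr_const a\<bar> < M" using assms a unfolding sat_def by auto
  show "sat_atom f' a"
  proof (cases a)
    case (CLe x c) then show ?thesis using 1 assms(1)[rule_format, of x] unfolding close_def by auto
  next
    case (CGe x c) then show ?thesis using 1 assms(1)[rule_format, of x] unfolding close_def by auto
  next
    case (CEq x c) then show ?thesis using 1 assms(1)[rule_format, of x] unfolding close_def by auto
  qed
qed

lemma en_trunc: "en p w0 (trunc p d) i = en p w0 d i"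
  by (induction i) (auto simp: trunc_def)

lemma good_trunc:
  assumes g: "good a b p w0 d"
  shows "good a b p w0 (trunc p d) \<and> w1of p w0 (trunc p d) = w1of p w0 d"
proof -
  let ?n = "length (P_trans p)"
  have dnn: "\<forall>j\<le>?n. 0 \<le> d j" using g unfolding good_def by blast
  have cst: "\<forall>a\<in>set (iv p i). \<bar>constr_const a\<bar> < Mc p" "\<forall>a\<in>set (tr_guard p i). \<bar>constr_const a\<bar> < Mc p" if "i \<le> ?n" for i
    using Kc_ge[OF that] unfolding Mc_def by force+
  have C1: "\<forall>x. close (Mc p) (clk p (trunc p d) i x) (clk p d i x)" if "i \<le> ?n" for i
  proof
    fix x show "close (Mc p) (clk p (trunc p d) i x) (clk p d i x)"
      by (rule clk_trunc) (use dnn that in auto)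
  qed
  have C2: "\<forall>x. close (Mc p) (clk p (trunc p d) i x + trunc p d i) (clk p d i x + d i)" if "i \<le> ?n" for i
  proof
    fix x show "close (Mc p) (clk p (trunc p d) i x + trunc p d i) (clk p d i x + d i)"
      by (rule clk_trunc2) (use dnn that in auto)
  qed
  have "good a b p w0 (trunc p d)"
    unfolding good_def
  proof (intro conjI allI impI)
    fix i assume i: "i \<le> ?n"
    have G: "0 \<le> d i" "sat (clk p d i) (iv p i)" "sat (\<lambda>x. clk p d i x + d i) (iv p i)" "en p w0 d i \<in> {a..b}"
       "en p w0 d i + d i * rt p i \<in> {a..b}" using g i unfolding good_def by blast+
    show "0 \<le> trunc p d i" using G(1) by (rule trunc_nonneg)
    show "sat (clk p (trunc p d) i) (iv p i)"
      using sat_close[OF C1[OF i] G(2) cst(1)[OF i]] .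
    show "sat (\<lambda>x. clk p (trunc p d) i x + trunc p d i) (iv p i)"
      using sat_close[OF C2[OF i] G(3) cst(1)[OF i]] .
    show "en p w0 (trunc p d) i \<in> {a..b}" using G(4) by (simp only: en_trunc)
    have "trunc p d i * rt p i = d i * rt p i" unfolding trunc_def by auto
    then show "en p w0 (trunc p d) i + trunc p d i * rt p i \<in> {a..b}" using G(5) by (simp only: en_trunc)
  next
    fix i assume i: "i < ?n"
    have G: "sat (\<lambda>x. clk p d i x + d i) (tr_guard p i)" using g i unfolding good_def by blast
    show "sat (\<lambda>x. clk p (trunc p d) i x + trunc p d i) (tr_guard p i)"
      using sat_close[OF C2 G cst(2)] i by simp
  next
    fix x
    have "close (Mc p) (clk p (trunc p d) ?n x + trunc p d ?n) (clk p d ?n x + d ?n)"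
      using C2[of ?n] by simp
    moreover have "clk p d ?n x + d ?n = 0" using g unfolding good_def by blast
    ultimately show "clk p (trunc p d) ?n x + trunc p d ?n = 0" using Mc_pos[of p] unfolding close_def by auto
  qed
  moreover have "trunc p d ?n * rt p ?n = d ?n * rt p ?n" unfolding trunc_def by auto
  ultimately show ?thesis unfolding w1of_def by (simp only: en_trunc)
qed

definition Bd :: "real \<Rightarrow> real \<Rightarrow> ('s,'c) etp \<Rightarrow> real" where
  "Bd a b p = Mc p + (\<Sum>i\<le>length (P_trans p). (b - a) / \<bar>rt p i\<bar>)"

lemma good_bound:
  assumes g: "good a b p w0 d" "d = trunc p d0" and i: "i \<le> length (P_trans p)"
  shows "d i \<le> Bd a b p"
proof -
  have G: "0 \<le> d i" "en p w0 d i \<in> {a..b}" "en p w0 d i + d i * rt p i \<in> {a..b}"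
    using g i unfolding good_def by blast+
  have ab: "a \<le> b" using G by auto
  have nn: "0 \<le> (b - a) / \<bar>rt p j\<bar>" for j using ab by simp
  have S: "0 \<le> (\<Sum>i\<le>length (P_trans p). (b - a) / \<bar>rt p i\<bar>)" using nn by (simp add: sum_nonneg)
  have Mp: "0 \<le> Mc p" using Mc_pos[of p] by simp
  show ?thesis
  proof (cases "rt p i = 0")
    case True
    then have "d i \<le> Mc p" using g(2) unfolding trunc_def by auto
    then show ?thesis unfolding Bd_def using S by linarith
  next
    case False
    have "\<bar>d i * rt p i\<bar> \<le> b - a" using G(2,3) by (simp add: abs_le_iff)
    then have "d i * \<bar>rt p i\<bar> \<le> b - a" using G(1) by (simp add: abs_mult)
    then have "d i \<le> (b - a) / \<bar>rt p i\<bar>" using False by (simp add: pos_le_divide_eq)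
    also have "\<dots> \<le> (\<Sum>i\<le>length (P_trans p). (b - a) / \<bar>rt p i\<bar>)"
      using i nn by (intro member_le_sum) auto
    finally show ?thesis unfolding Bd_def using Mp by linarith
  qed
qed

lemma etp_rel_bounded_witness:
  assumes "etp_rel {a..b} p w0 w1"
  shows "\<exists>d. good a b p w0 d \<and> w1 = w1of p w0 d \<and> (\<forall>i\<le>length (P_trans p). d i \<in> {0..Bd a b p})"
proof -
  obtain d0 where d0: "good a b p w0 d0" "w1 = w1of p w0 d0" using assms unfolding etp_rel_good by blast
  have t: "good a b p w0 (trunc p d0)" "w1of p w0 (trunc p d0) = w1of p w0 d0" using good_trunc[OF d0(1)] by auto
  have "\<forall>i\<le>length (P_trans p). trunc p d0 i \<in> {0..Bd a b p}"
  proof (intro allI impI)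
    fix i assume i: "i \<le> length (P_trans p)"
    have "0 \<le> trunc p d0 i" using t(1) i unfolding good_def by auto
    moreover have "trunc p d0 i \<le> Bd a b p" using good_bound[OF t(1) refl i] .
    ultimately show "trunc p d0 i \<in> {0..Bd a b p}" by simp
  qed
  then show ?thesis using t d0 by metis
qed



lemma strict_mono_comp: "strict_mono r \<Longrightarrow> strict_mono s \<Longrightarrow> strict_mono (r \<circ> s)"
  unfolding strict_mono_def by auto

lemma subseq_conv:
  fixes f :: "nat \<Rightarrow> nat \<Rightarrow> real"
  assumes "\<forall>k. \<forall>i<m. f k i \<in> {0..B}"
  shows "\<exists>r l. strict_mono r \<and> (\<forall>i<m. (\<lambda>k. f (r k) i) \<longlonglongrightarrow> l i)"
  using assms
proof (induction m)
  case 0 then show ?case by (auto intro: strict_mono_id)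
next
  case (Suc m)
  then obtain r l where r: "strict_mono r" and l: "\<forall>i<m. (\<lambda>k. f (r k) i) \<longlonglongrightarrow> l i" by auto
  have "\<exists>l'\<in>{0..B}. \<exists>s. strict_mono s \<and> ((\<lambda>k. f (r k) m) \<circ> s) \<longlonglongrightarrow> l'"
    by (rule compact_def[THEN iffD1, rule_format, OF compact_Icc]) (use Suc.prems in auto)
  then obtain l' s where s: "strict_mono s" and l': "((\<lambda>k. f (r k) m) \<circ> s) \<longlonglongrightarrow> l'"
    by blast
  have "\<forall>i<Suc m. (\<lambda>k. f ((r \<circ> s) k) i) \<longlonglongrightarrow> (l(m := l')) i"
  proof (intro allI impI)
    fix i assume i: "i < Suc m"
    show "(\<lambda>k. f ((r \<circ> s) k) i) \<longlonglongrightarrow> (l(m := l')) i"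
    proof (cases "i = m")
      case True then show ?thesis using l' by (simp add: o_def)
    next
      case False
      then have "(\<lambda>k. f (r k) i) \<longlonglongrightarrow> l i" using l i by auto
      from LIMSEQ_subseq_LIMSEQ[OF this s] show ?thesis using False by (simp add: o_def)
    qed
  qed
  then show ?case using strict_mono_comp[OF r s] by blast
qed

lemma clk_lim:
  assumes "\<forall>j<i. (\<lambda>k. D k j) \<longlonglongrightarrow> l j"
  shows "(\<lambda>k. clk p (D k) i x) \<longlonglongrightarrow> clk p l i x"
  using assms
proof (induction i)
  case 0 then show ?case by simp
next
  case (Suc i)
  then have h: "(\<lambda>k. clk p (D k) i x + D k i) \<longlonglongrightarrow> clk p l i x + l i" by (intro tendsto_add) auto
  show ?case
  proof (cases "x \<in> tr_reset p i")
    case True then show ?thesis by simp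
  next
    case False then show ?thesis using h by simp
  qed
qed

lemma en_lim:
  assumes "\<forall>j<i. (\<lambda>k. D k j) \<longlonglongrightarrow> l j" "W \<longlonglongrightarrow> w"
  shows "(\<lambda>k. en p (W k) (D k) i) \<longlonglongrightarrow> en p w l i"
  using assms
proof (induction i)
  case 0 then show ?case by simp
next
  case (Suc i)
  then show ?case by (auto intro!: tendsto_intros)
qed

lemma sat_lim:
  assumes "\<forall>x. (\<lambda>k. F k x) \<longlonglongrightarrow> f x" "\<forall>k. sat (F k) g"
  shows "sat f g"
  unfolding sat_def
proof
  fix a assume a: "a \<in> set g"
  have 1: "\<forall>k. sat_atom (F k) a" using assms a unfolding sat_def by auto
  show "sat_atom f a"
  proof (cases a)
    case (CLe x c)
    have "f x \<le> c" using 1 CLe by (intro LIMSEQ_le_const2[OF assms(1)[rule_format, of x]]) auto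
    then show ?thesis using CLe by simp
  next
    case (CGe x c)
    have "c \<le> f x" using 1 CGe by (intro LIMSEQ_le_const[OF assms(1)[rule_format, of x]]) auto
    then show ?thesis using CGe by simp
  next
    case (CEq x c)
    have "(\<lambda>k. F k x) = (\<lambda>k. c)" using 1 CEq by auto
    then have "(\<lambda>k. c) \<longlonglongrightarrow> f x" using assms(1) by metis
    then have "f x = c" using LIMSEQ_unique tendsto_const by blast
    then show ?thesis using CEq by simp
  qed
qed

lemma mem_lim:
  fixes X :: "nat \<Rightarrow> real"
  assumes "X \<longlonglongrightarrow> y" "\<forall>k. X k \<in> {a..b}" shows "y \<in> {a..b}"
proof -
  have "a \<le> y" using assms by (intro LIMSEQ_le_const[OF assms(1)]) auto
  moreover have "y \<le> b" using assms by (intro LIMSEQ_le_const2[OF assms(1)]) auto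
  ultimately show ?thesis by simp
qed

lemma closed_etp: "closed (rset (etp_rel {a..b} p))"
  unfolding closed_sequential_limits
proof (intro allI impI)
  fix X :: "nat \<Rightarrow> real \<times> real" and L
  assume A: "(\<forall>n. X n \<in> rset (etp_rel {a..b} p)) \<and> X \<longlonglongrightarrow> L"
  let ?n = "length (P_trans p)"
  have XR: "etp_rel {a..b} p (fst (X k)) (snd (X k))" for k
    using conjunct1[OF A] unfolding rset_def by (simp add: case_prod_beta)
  have "\<forall>k. \<exists>d. good a b p (fst (X k)) d \<and> snd (X k) = w1of p (fst (X k)) d \<and> (\<forall>i\<le>?n. d i \<in> {0..Bd a b p})"
    using etp_rel_bounded_witness[OF XR] by blast
  then obtain D where D0: "\<forall>k. good a b p (fst (X k)) (D k) \<and> snd (X k) = w1of p (fst (X k)) (D k) \<and> (\<forall>i\<le>?n. D k i \<in> {0..Bd a b p})"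
    using choice[of "\<lambda>k d. good a b p (fst (X k)) d \<and> snd (X k) = w1of p (fst (X k)) d \<and> (\<forall>i\<le>?n. d i \<in> {0..Bd a b p})"] by blast
  have D: "\<And>k. good a b p (fst (X k)) (D k)" "\<And>k. snd (X k) = w1of p (fst (X k)) (D k)"
     "\<And>k. \<forall>i\<le>?n. D k i \<in> {0..Bd a b p}" using D0 by blast+
  have "\<forall>k. \<forall>i<Suc ?n. D k i \<in> {0..Bd a b p}" using D(3) by (simp add: less_Suc_eq_le)
  then obtain r l where r: "strict_mono r" and l: "\<forall>i<Suc ?n. (\<lambda>k. D (r k) i) \<longlonglongrightarrow> l i"
    using subseq_conv by blast
  define W where "W = (\<lambda>k. fst (X (r k)))"
  define D' where "D' = (\<lambda>k. D (r k))"
  have W: "W \<longlonglongrightarrow> fst L" unfolding W_def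
    using LIMSEQ_subseq_LIMSEQ[OF tendsto_fst[OF conjunct2[OF A]] r] by (simp add: o_def)
  have gD: "good a b p (W k) (D' k)" for k unfolding W_def D'_def using D(1) .
  have lj: "\<forall>j<i. (\<lambda>k. D' k j) \<longlonglongrightarrow> l j" if "i \<le> Suc ?n" for i using l that unfolding D'_def by auto
  have CL: "(\<lambda>k. clk p (D' k) i x) \<longlonglongrightarrow> clk p l i x" if "i \<le> Suc ?n" for i x
    by (rule clk_lim[OF lj[OF that]])
  have dl: "(\<lambda>k. D' k i) \<longlonglongrightarrow> l i" if "i \<le> ?n" for i using lj[of "Suc i"] that by auto
  have CL2: "(\<lambda>k. clk p (D' k) i x + D' k i) \<longlonglongrightarrow> clk p l i x + l i" if "i \<le> ?n" for i x
    using that by (intro tendsto_add CL dl) auto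
  have EL: "(\<lambda>k. en p (W k) (D' k) i) \<longlonglongrightarrow> en p (fst L) l i" if "i \<le> Suc ?n" for i
    by (rule en_lim[OF lj[OF that] W])
  have EL2: "(\<lambda>k. en p (W k) (D' k) i + D' k i * rt p i) \<longlonglongrightarrow> en p (fst L) l i + l i * rt p i" if "i \<le> ?n" for i
    using that by (intro tendsto_add tendsto_mult EL dl tendsto_const) auto
  have "good a b p (fst L) l"
    unfolding good_def
  proof (intro conjI allI impI)
    fix i assume i: "i \<le> ?n"
    have G: "\<forall>k. 0 \<le> D' k i" "\<forall>k. sat (clk p (D' k) i) (iv p i)" "\<forall>k. sat (\<lambda>x. clk p (D' k) i x + D' k i) (iv p i)"
      "\<forall>k. en p (W k) (D' k) i \<in> {a..b}" "\<forall>k. en p (W k) (D' k) i + D' k i * rt p i \<in> {a..b}"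
      using gD i unfolding good_def by blast+
    show "0 \<le> l i" using G(1) by (intro LIMSEQ_le_const[OF dl[OF i]]) auto
    show "sat (clk p l i) (iv p i)" using G(2) CL i by (intro sat_lim[where F="\<lambda>k. clk p (D' k) i"]) auto
    show "sat (\<lambda>x. clk p l i x + l i) (iv p i)" using G(3) CL2[OF i]
      by (intro sat_lim[where F="\<lambda>k x. clk p (D' k) i x + D' k i"]) auto
    show "en p (fst L) l i \<in> {a..b}" using G(4) EL i by (intro mem_lim) auto
    show "en p (fst L) l i + l i * rt p i \<in> {a..b}" using G(5) EL2[OF i] by (intro mem_lim) auto
  next
    fix i assume i: "i < ?n"
    have G: "\<forall>k. sat (\<lambda>x. clk p (D' k) i x + D' k i) (tr_guard p i)" using gD i unfolding good_def by blast
    show "sat (\<lambda>x. clk p l i x + l i) (tr_guard p i)" using G CL2 i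
      by (intro sat_lim[where F="\<lambda>k x. clk p (D' k) i x + D' k i"]) auto
  next
    fix x
    have G: "\<forall>k. clk p (D' k) ?n x + D' k ?n = 0" using gD unfolding good_def by blast
    have "(\<lambda>k. (0::real)) \<longlonglongrightarrow> clk p l ?n x + l ?n" using CL2[of ?n x] G by simp
    then show "clk p l ?n x + l ?n = 0" using LIMSEQ_unique[OF tendsto_const] by metis
  qed
  moreover have "snd L = w1of p (fst L) l"
  proof -
    have 1: "(\<lambda>k. snd (X (r k))) \<longlonglongrightarrow> snd L"
      using LIMSEQ_subseq_LIMSEQ[OF tendsto_snd[OF conjunct2[OF A]] r] by (simp add: o_def)
    have "(\<lambda>k. snd (X (r k))) = (\<lambda>k. en p (W k) (D' k) ?n + D' k ?n * rt p ?n)"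
      using D(2) unfolding W_def D'_def w1of_def by auto
    then have 2: "(\<lambda>k. snd (X (r k))) \<longlonglongrightarrow> w1of p (fst L) l" using EL2[of ?n] unfolding w1of_def by simp
    show ?thesis using LIMSEQ_unique[OF 1 2] .
  qed
  ultimately have "etp_rel {a..b} p (fst L) (snd L)" unfolding etp_rel_good by (intro exI conjI)
  then show "L \<in> rset (etp_rel {a..b} p)" unfolding rset_def by (simp add: case_prod_beta)
qed

lemma etp_sub: "rset (etp_rel {a..b} p) \<subseteq> {a..b} \<times> {a..b}"
proof
  fix z assume "z \<in> rset (etp_rel {a..b} p)"
  then have "etp_rel {a..b} p (fst z) (snd z)" unfolding rset_def by (simp add: case_prod_beta)
  then obtain d where z: "good a b p (fst z) d" "snd z = w1of p (fst z) d"
    unfolding etp_rel_good by blast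
  have "en p (fst z) d 0 \<in> {a..b}" using z(1) unfolding good_def by blast
  moreover have "en p (fst z) d (length (P_trans p)) + d (length (P_trans p)) * rt p (length (P_trans p)) \<in> {a..b}"
    using z(1) unfolding good_def by blast
  ultimately show "z \<in> {a..b} \<times> {a..b}" using z(2) unfolding w1of_def by (simp add: mem_Times_iff)
qed

lemma compact_etp: "compact (rset (etp_rel {a..b} p))"
proof -
  have "bounded ({a..b} \<times> {a..b::real})" by (intro compact_imp_bounded compact_Times compact_Icc)
  then have "bounded (rset (etp_rel {a..b} p))" using etp_sub by (rule bounded_subset)
  then show ?thesis unfolding compact_eq_bounded_closed using closed_etp by blast
qed



lemma rset_iff: "(x, y) \<in> rset R \<longleftrightarrow> R x y" unfolding rset_def by simp

lemma convex_OO: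
  assumes "convex (rset R1)" "convex (rset R2)"
  shows "convex (rset (R1 OO R2))"
  unfolding convex_def
proof (intro ballI allI impI)
  fix p q :: "real \<times> real" and u v :: real
  assume p: "p \<in> rset (R1 OO R2)" and q: "q \<in> rset (R1 OO R2)" and uv: "0 \<le> u" "0 \<le> v" "u + v = 1"
  obtain x1 z1 where p': "p = (x1, z1)" by (cases p)
  obtain x2 z2 where q': "q = (x2, z2)" by (cases q)
  obtain y1 where y1: "R1 x1 y1" "R2 y1 z1" using p by (auto simp: p' rset_iff relcompp_apply)
  obtain y2 where y2: "R1 x2 y2" "R2 y2 z2" using q by (auto simp: q' rset_iff relcompp_apply)
  have "u *\<^sub>R (x1, y1) + v *\<^sub>R (x2, y2) \<in> rset R1"
    using assms(1) y1(1) y2(1) uv unfolding convex_def rset_iff by (metis rset_iff)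
  then have 1: "R1 (u * x1 + v * x2) (u * y1 + v * y2)" by (simp add: rset_iff)
  have "u *\<^sub>R (y1, z1) + v *\<^sub>R (y2, z2) \<in> rset R2"
    using assms(2) y1(2) y2(2) uv unfolding convex_def rset_iff by (metis rset_iff)
  then have 2: "R2 (u * y1 + v * y2) (u * z1 + v * z2)" by (simp add: rset_iff)
  have "(R1 OO R2) (u * x1 + v * x2) (u * z1 + v * z2)" using 1 2 by blast
  then show "u *\<^sub>R p + v *\<^sub>R q \<in> rset (R1 OO R2)" using p' q' by (simp add: rset_iff)
qed

lemma compact_OO:
  assumes "compact (rset R1)" "compact (rset R2)"
  shows "compact (rset (R1 OO R2))"
proof -
  let ?f = "\<lambda>z::(real \<times> real) \<times> (real \<times> real). (fst (fst z), snd (snd z))"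
  let ?S = "(rset R1 \<times> rset R2) \<inter> {z. snd (fst z) = fst (snd z)}"
  have eq: "rset (R1 OO R2) = ?f ` ?S"
  proof
    show "rset (R1 OO R2) \<subseteq> ?f ` ?S"
    proof
      fix w assume "w \<in> rset (R1 OO R2)"
      then obtain x z y where w: "w = (x, z)" "R1 x y" "R2 y z" by (cases w) (auto simp: rset_iff)
      then have "((x, y), (y, z)) \<in> ?S" by (simp add: rset_iff)
      then show "w \<in> ?f ` ?S" using w(1) by (metis (no_types, lifting) fst_conv image_eqI snd_conv)
    qed
  next
    show "?f ` ?S \<subseteq> rset (R1 OO R2)"
    proof
      fix w assume "w \<in> ?f ` ?S"
      then obtain x y y' z where "w = (x, z)" "R1 x y" "R2 y' z" "y = y'" by (auto simp: rset_iff)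
      then show "w \<in> rset (R1 OO R2)" by (auto simp: rset_iff)
    qed
  qed
  have "closed {z::(real \<times> real) \<times> (real \<times> real). snd (fst z) = fst (snd z)}"
    by (intro closed_Collect_eq continuous_intros)
  then have "compact ?S" using assms by (intro compact_Int_closed compact_Times)
  moreover have "continuous_on ?S ?f" by (intro continuous_intros)
  ultimately show ?thesis unfolding eq by (rule compact_continuous_image[rotated])
qed

lemma sub_OO:
  assumes "rset R1 \<subseteq> E \<times> E" "rset R2 \<subseteq> E \<times> E"
  shows "rset (R1 OO R2) \<subseteq> E \<times> E"
  using assms unfolding rset_def by blast

lemma erel_seq_props:
  "ps \<noteq> [] \<Longrightarrow> compact (rset (erel_seq {a..b} ps)) \<and> convex (rset (erel_seq {a..b} ps)) \<and>
     rset (erel_seq {a..b} ps) \<subseteq> {a..b} \<times> {a..b}"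
proof (induction "{a..b::real}" ps rule: erel_seq.induct)
  case 1 then show ?case by simp
next
  case (2 p) then show ?case by (simp only: erel_seq.simps) (intro conjI compact_etp convex_etp etp_sub)
next
  case (3 p q ps)
  then have IH: "compact (rset (erel_seq {a..b} (q # ps)))" "convex (rset (erel_seq {a..b} (q # ps)))"
      "rset (erel_seq {a..b} (q # ps)) \<subseteq> {a..b} \<times> {a..b}" by auto
  show ?case by (simp only: erel_seq.simps) (intro conjI compact_OO convex_OO sub_OO compact_etp convex_etp etp_sub IH)
qed



lemma interval_of_compact_convex:
  fixes S :: "real set"
  assumes "compact S" "convex S" shows "\<exists>c d. S = {c..d}"
  using assms connected_compact_interval_1 convex_connected by blast

lemma pre_rel_eq:
  assumes "rset R \<subseteq> E \<times> E"
  shows "pre_rel E R I = fst ` (rset R \<inter> (UNIV \<times> I))"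
proof
  show "pre_rel E R I \<subseteq> fst ` (rset R \<inter> (UNIV \<times> I))"
  proof
    fix x assume "x \<in> pre_rel E R I"
    then obtain y where "y \<in> I" "R x y" unfolding pre_rel_def by auto
    then have "(x, y) \<in> rset R \<inter> (UNIV \<times> I)" by (simp add: rset_iff)
    then show "x \<in> fst ` (rset R \<inter> (UNIV \<times> I))" by (metis fst_conv image_eqI)
  qed
next
  show "fst ` (rset R \<inter> (UNIV \<times> I)) \<subseteq> pre_rel E R I"
  proof
    fix x assume "x \<in> fst ` (rset R \<inter> (UNIV \<times> I))"
    then obtain y where "(x, y) \<in> rset R" "y \<in> I" by auto
    moreover then have "x \<in> E" using assms by auto
    ultimately show "x \<in> pre_rel E R I" unfolding pre_rel_def by (auto simp: rset_iff)
  qed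
qed

lemma pre_closed_subint:
  assumes C: "compact (rset R)" "convex (rset R)" "rset R \<subseteq> E \<times> E"
    and I: "I \<in> closed_subints E"
  shows "pre_rel E R I \<in> closed_subints E"
proof -
  obtain c d where Icd: "I = {c..d}" using I unfolding closed_subints_def by auto
  have cS: "compact (rset R \<inter> (UNIV \<times> I))" unfolding Icd
    by (intro compact_Int_closed C closed_Times closed_UNIV closed_atLeastAtMost)
  have "compact (fst ` (rset R \<inter> (UNIV \<times> I)))"
    by (rule compact_continuous_image[OF _ cS]) (intro continuous_intros)
  moreover have "convex (fst ` (rset R \<inter> (UNIV \<times> I)))" unfolding Icd
    by (intro convex_linear_image linear_fst convex_Int C convex_Times convex_UNIV convex_real_interval)
  ultimately obtain c' d' where "pre_rel E R I = {c'..d'}"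
    using interval_of_compact_convex pre_rel_eq[OF C(3)] by metis
  moreover have "pre_rel E R I \<subseteq> E" unfolding pre_rel_def by auto
  ultimately show ?thesis unfolding closed_subints_def by auto
qed

lemma pre_mono: "I \<subseteq> J \<Longrightarrow> pre_rel E R I \<subseteq> pre_rel E R J"
  unfolding pre_rel_def by auto

lemma abstract_main:
  fixes R :: "real \<Rightarrow> real \<Rightarrow> bool" and a b :: real
  assumes C: "compact (rset R)" "convex (rset R)" "rset R \<subseteq> {a..b} \<times> {a..b}"
  defines "E \<equiv> {a..b}"
  defines "F \<equiv> (\<lambda>i. (pre_rel E R ^^ i) E)"
  defines "N \<equiv> (\<Inter>i. F i)"
  shows
     "(\<forall>I\<in>closed_subints E. pre_rel E R I \<in> closed_subints E) \<and>
     N \<in> closed_subints E \<and>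
     pre_rel E R N = N \<and>
     (\<forall>I\<in>closed_subints E. pre_rel E R I = I \<longrightarrow> I \<subseteq> N) \<and>
     (\<forall>w0\<in>N. \<exists>w1\<in>N. R w0 w1) \<and>
     (\<forall>S. S \<subseteq> E \<and> (\<forall>w0\<in>S. \<exists>w1\<in>S. R w0 w1) \<longrightarrow> S \<subseteq> N) \<and>
     (N = {w0 \<in> E. \<exists>f :: nat \<Rightarrow> real. f 0 = w0 \<and> (\<forall>k. R (f k) (f (Suc k)))})"
proof -
  have C3: "rset R \<subseteq> E \<times> E" using C(3) unfolding E_def .
  have P1: "\<forall>I\<in>closed_subints E. pre_rel E R I \<in> closed_subints E"
    using pre_closed_subint[OF C(1,2) C3] by blast
  have E_in: "E \<in> closed_subints E" unfolding closed_subints_def E_def by auto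
  have F_in: "F i \<in> closed_subints E" for i
    by (induction i) (auto simp: F_def E_in P1)
  have F_Suc: "F (Suc i) = pre_rel E R (F i)" for i unfolding F_def by simp
  have F_dec: "F (Suc i) \<subseteq> F i" for i
  proof (induction i)
    case 0 then show ?case unfolding F_Suc by (simp add: F_def pre_rel_def)
  next
    case (Suc i) then show ?case unfolding F_Suc[of "Suc i"] F_Suc[of i] by (rule pre_mono)
  qed
  have F_anti: "m \<le> n \<Longrightarrow> F n \<subseteq> F m" for m n
    by (induction n rule: dec_induct) (use F_dec in auto)
  have F_cc: "compact (F i) \<and> convex (F i) \<and> F i \<subseteq> E" for i
    using F_in[of i] unfolding closed_subints_def by (auto simp: compact_Icc convex_real_interval)
  have NE: "N \<subseteq> E" unfolding N_def using F_cc[of 0] by auto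
  have "compact N"
  proof -
    have "closed N" unfolding N_def using F_cc by (intro closed_INT) (auto intro: compact_imp_closed)
    moreover have "bounded N" using NE unfolding E_def by (rule bounded_subset[OF bounded_closed_interval])
    ultimately show ?thesis by (simp add: compact_eq_bounded_closed)
  qed
  moreover have "convex N" unfolding N_def using F_cc by (intro convex_INT) auto
  ultimately obtain c d where "N = {c..d}" using interval_of_compact_convex by blast
  then have P2: "N \<in> closed_subints E" using NE unfolding closed_subints_def by auto
  have post: "S \<subseteq> N" if S: "S \<subseteq> E" "\<forall>w0\<in>S. \<exists>w1\<in>S. R w0 w1" for S
  proof -
    have "S \<subseteq> F i" for i
    proof (induction i)
      case 0 then show ?case using S by (simp add: F_def)
    next
      case (Suc i)
      have "S \<subseteq> pre_rel E R S" using S unfolding pre_rel_def by auto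
      also have "\<dots> \<subseteq> pre_rel E R (F i)" using Suc by (rule pre_mono)
      finally show ?case unfolding F_Suc .
    qed
    then show ?thesis unfolding N_def by auto
  qed
  have P3: "pre_rel E R N = N"
  proof
    show "pre_rel E R N \<subseteq> N"
    proof -
      have "pre_rel E R N \<subseteq> F i" for i
      proof (cases i)
        case 0 then show ?thesis by (auto simp: F_def pre_rel_def)
      next
        case (Suc j)
        have "N \<subseteq> F j" unfolding N_def by auto
        then have "pre_rel E R N \<subseteq> pre_rel E R (F j)" by (rule pre_mono)
        then show ?thesis using Suc F_Suc by simp
      qed
      then show ?thesis unfolding N_def by auto
    qed
  next
    show "N \<subseteq> pre_rel E R N"
    proof
      fix w0 assume w0: "w0 \<in> N"
      define G where "G = (\<lambda>i. snd ` (rset R \<inter> ({w0} \<times> UNIV)) \<inter> F i)"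
      have cG: "compact (snd ` (rset R \<inter> ({w0} \<times> UNIV)))"
      proof (rule compact_continuous_image)
        show "continuous_on (rset R \<inter> ({w0} \<times> UNIV)) snd" by (rule continuous_on_snd[OF continuous_on_id])
        show "compact (rset R \<inter> ({w0} \<times> UNIV))" by (intro compact_Int_closed C(1) closed_Times closed_UNIV closed_singleton)
      qed
      have "\<Inter> (range G) \<noteq> {}"
      proof (rule compact_nest)
        fix n show "compact (G n)" unfolding G_def
          using cG F_cc by (intro compact_Int_closed) (auto intro: compact_imp_closed)
      next
        fix n
        have "w0 \<in> F (Suc n)" using w0 unfolding N_def by auto
        then obtain y where "y \<in> F n" "R w0 y" unfolding F_Suc pre_rel_def by auto
        then have "y \<in> G n" unfolding G_def by (force simp: rset_iff)
        then show "G n \<noteq> {}" by auto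
      next
        fix m n :: nat assume "m \<le> n" then show "G n \<subseteq> G m" unfolding G_def using F_anti by auto
      qed
      then obtain y where y: "\<forall>i. y \<in> G i" by auto
      then have "y \<in> N" "R w0 y" unfolding G_def N_def by (auto simp: rset_iff)
      then show "w0 \<in> pre_rel E R N" using w0 NE unfolding pre_rel_def by auto
    qed
  qed
  have P5: "\<forall>w0\<in>N. \<exists>w1\<in>N. R w0 w1"
  proof
    fix w0 assume "w0 \<in> N" then have "w0 \<in> pre_rel E R N" using P3 by simp
    then show "\<exists>w1\<in>N. R w0 w1" unfolding pre_rel_def by auto
  qed
  have P4: "\<forall>I\<in>closed_subints E. pre_rel E R I = I \<longrightarrow> I \<subseteq> N"
  proof (intro ballI impI)
    fix I assume I: "I \<in> closed_subints E" "pre_rel E R I = I"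
    show "I \<subseteq> N"
    proof (rule post)
      show "I \<subseteq> E" using I unfolding closed_subints_def by auto
      show "\<forall>w0\<in>I. \<exists>w1\<in>I. R w0 w1"
      proof
        fix w0 assume "w0 \<in> I" then have "w0 \<in> pre_rel E R I" using I by simp
        then show "\<exists>w1\<in>I. R w0 w1" unfolding pre_rel_def by auto
      qed
    qed
  qed
  have P7: "N = {w0 \<in> E. \<exists>f :: nat \<Rightarrow> real. f 0 = w0 \<and> (\<forall>k. R (f k) (f (Suc k)))}"
  proof
    show "N \<subseteq> {w0 \<in> E. \<exists>f :: nat \<Rightarrow> real. f 0 = w0 \<and> (\<forall>k. R (f k) (f (Suc k)))}"
    proof
      fix w0 assume w0: "w0 \<in> N"
      obtain g where g: "\<forall>w\<in>N. g w \<in> N \<and> R w (g w)" using bchoice[of N "\<lambda>w v. v \<in> N \<and> R w v"] P5 by blast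
      define f where "f = (\<lambda>k. (g ^^ k) w0)"
      have fN: "f k \<in> N" for k by (induction k) (use w0 g in \<open>auto simp: f_def\<close>)
      have "R (f k) (f (Suc k))" for k using g fN[of k] by (simp add: f_def)
      then show "w0 \<in> {w0 \<in> E. \<exists>f :: nat \<Rightarrow> real. f 0 = w0 \<and> (\<forall>k. R (f k) (f (Suc k)))}"
        using w0 NE by (auto simp: f_def intro!: exI[of _ f])
    qed
  next
    let ?S = "{w0 \<in> E. \<exists>f :: nat \<Rightarrow> real. f 0 = w0 \<and> (\<forall>k. R (f k) (f (Suc k)))}"
    show "?S \<subseteq> N"
    proof (rule post)
      show "?S \<subseteq> E" by auto
      show "\<forall>w0\<in>?S. \<exists>w1\<in>?S. R w0 w1"
      proof
        fix w0 assume "w0 \<in> ?S"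
        then obtain f where f: "f 0 = w0" "\<forall>k. R (f k) (f (Suc k))" by auto
        have "(f 0, f 1) \<in> rset R" using f(2)[rule_format, of 0] by (simp add: rset_iff)
        then have "f 1 \<in> E" using C3 by auto
        moreover have "\<exists>g :: nat \<Rightarrow> real. g 0 = f 1 \<and> (\<forall>k. R (g k) (g (Suc k)))"
        proof (intro exI conjI)
          show "(\<lambda>k. f (Suc k)) 0 = f 1" by simp
          show "\<forall>k. R ((\<lambda>k. f (Suc k)) k) ((\<lambda>k. f (Suc k)) (Suc k))" using f(2) by simp
        qed
        ultimately have "f 1 \<in> ?S" by (simp only: mem_Collect_eq)
        moreover have "R w0 (f 1)" using f(2)[rule_format, of 0] f(1) by simp
        ultimately show "\<exists>w1\<in>?S. R w0 w1" by blast
      qed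
    qed
  qed
  have P6: "\<forall>S. S \<subseteq> E \<and> (\<forall>w0\<in>S. \<exists>w1\<in>S. R w0 w1) \<longrightarrow> S \<subseteq> N" using post by blast
  show ?thesis using P1 P2 P3 P4 P5 P6 P7 by (intro conjI)
qed


theorem mainTheorem3:
  fixes ps :: "('s, 'c::finite) etp list" and a b :: real
  assumes "a \<in> \<rat>" and "b \<in> \<rat>"
    and "ps \<noteq> []" and "\<forall>p\<in>set ps. wf_etp p"
  shows
   "let E = {a..b}; R = erel_seq E ps; N = (\<Inter>i. (pre_rel E R ^^ i) E) in
     (\<forall>I\<in>closed_subints E. pre_rel E R I \<in> closed_subints E) \<and>
     N \<in> closed_subints E \<and>
     pre_rel E R N = N \<and>
     (\<forall>I\<in>closed_subints E. pre_rel E R I = I \<longrightarrow> I \<subseteq> N) \<and>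
     (\<forall>w0\<in>N. \<exists>w1\<in>N. R w0 w1) \<and>
     (\<forall>S. S \<subseteq> E \<and> (\<forall>w0\<in>S. \<exists>w1\<in>S. R w0 w1) \<longrightarrow> S \<subseteq> N) \<and>
     (is_cycle ps \<longrightarrow>
        N = {w0 \<in> E. \<exists>f :: nat \<Rightarrow> real. f 0 = w0 \<and> (\<forall>k. R (f k) (f (Suc k)))})"
proof -
  have H: "compact (rset (erel_seq {a..b} ps))" "convex (rset (erel_seq {a..b} ps))"
     "rset (erel_seq {a..b} ps) \<subseteq> {a..b} \<times> {a..b}"
    using erel_seq_props[OF assms(3)] by blast+
  note A = abstract_main[OF H]
  show ?thesis unfolding Let_def using A by (elim conjE) (intro conjI impI; assumption)
qed

end
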